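(* For $n\ge2$ and $\theta=(\theta_{ij})_{1\le i,j\le n-1}\in\mathbb{R}^{(n-1)^2}$ let $$\Phi(\theta)=\binom n2^{-2}\Big(\sum_{\substack{i>\ell\\ j>k}}\cos(\theta_{ij}-\theta_{ik}-\theta_{\ell j}+\theta_{\ell k})+\sum_{\substack{i>\ell\\ j}}\cos(\theta_{ij}-\theta_{\ell j})+\sum_{\substack{j>k\\ i}}\cos(\theta_{ij}-\theta_{ik})+\sum_{i,j}\cos\theta_{ij}\Big),$$ where all indices $i,\ell,j,k$ range over $\{1,\dots,n-1\}$. There exist $n_0,q_0$ such that for all integers $n\ge n_0$, $q\ge q_0$ and every $\theta\in[-\pi,\pi]^{(n-1)^2}$ with $\|\theta\|_\infty>1/\sqrt q$, $$\Phi(\theta)\le1-\frac1{400n^2q}.$$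
   Context: $\Phi$ is the characteristic function of one increment of the $n\times n$ Diaconis–Gangolli walk, restricted to the first $n-1$ rows and $n-1$ columns. *)

theory Defs
  imports Complex_Main
begin

text \<open>theta is represented as a function nat => nat => real, only the entries
  with indices in {1..<n} (i.e. 1..n-1) are relevant.\<close>

definition DG_Phi :: "nat \<Rightarrow> (nat \<Rightarrow> nat \<Rightarrow> real) \<Rightarrow> real" where
  "DG_Phi n \<theta> =
     (1 / (real (n choose 2))^2) *
     ((\<Sum>i\<in>{1..<n}. \<Sum>l\<in>{1..<i}. \<Sum>j\<in>{1..<n}. \<Sum>k\<in>{1..<j}.
          cos (\<theta> i j - \<theta> i k - \<theta> l j + \<theta> l k))
    + (\<Sum>i\<in>{1..<n}. \<Sum>l\<in>{1..<i}. \<Sum>j\<in>{1..<n}. cos (\<theta> i j - \<theta> l j))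
    + (\<Sum>j\<in>{1..<n}. \<Sum>k\<in>{1..<j}. \<Sum>i\<in>{1..<n}. cos (\<theta> i j - \<theta> i k))
    + (\<Sum>i\<in>{1..<n}. \<Sum>j\<in>{1..<n}. cos (\<theta> i j)))"

end

theory Submission imports Defs begin

lemma sum_sym:
  fixes f :: "nat \<Rightarrow> nat \<Rightarrow> real"
  assumes "\<And>a b. f a b = f b a" "\<And>a. f a a = 0"
  shows "(\<Sum>i\<in>{1..<n}. \<Sum>l\<in>{1..<n}. f i l) = 2 * (\<Sum>i\<in>{1..<n}. \<Sum>l\<in>{1..<i}. f i l)"
proof (induction n)
  case 0 then show ?case by simp
next
  case (Suc n)
  show ?case
  proof (cases "n = 0")
    case True then show ?thesis by simp
  next
    case False
    then have e: "{1..<Suc n} = insert n {1..<n}" by auto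
    have "(\<Sum>i\<in>{1..<Suc n}. \<Sum>l\<in>{1..<Suc n}. f i l)
        = (\<Sum>i\<in>{1..<n}. \<Sum>l\<in>{1..<n}. f i l) + (\<Sum>i\<in>{1..<n}. f i n) + (\<Sum>l\<in>{1..<n}. f n l) + f n n"
      unfolding e by (simp add: sum.distrib)
    also have "\<dots> = (\<Sum>i\<in>{1..<n}. \<Sum>l\<in>{1..<n}. f i l) + 2 * (\<Sum>l\<in>{1..<n}. f n l)"
    proof -
      have "(\<Sum>i\<in>{1..<n}. f i n) = (\<Sum>l\<in>{1..<n}. f n l)"
        by (rule sum.cong[OF refl]) (rule assms(1))
      then show ?thesis using assms(2)[of n] by simp
    qed
    finally show ?thesis using Suc by (simp add: e)
  qed
qed

lemma sin_add_abs: "\<bar>sin ((u::real) + v)\<bar> \<le> \<bar>sin u\<bar> + \<bar>sin v\<bar>"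
proof -
  have "\<bar>sin u * cos v\<bar> \<le> \<bar>sin u\<bar>" unfolding abs_mult using abs_cos_le_one[of v] by (simp add: mult_left_le)
  moreover have "\<bar>cos u * sin v\<bar> \<le> \<bar>sin v\<bar>" unfolding abs_mult using abs_cos_le_one[of u] by (simp add: mult_left_le_one_le)
  ultimately show ?thesis by (simp add: sin_add)
qed

lemma one_minus_cos: "1 - cos (y::real) = 2 * sin (y/2) ^ 2"
  using cos_double_sin[of "y/2"] by simp

lemma four:
  fixes a b c d :: real
  shows "(1 - cos (a+b+c+d)) / 4 \<le> (1 - cos a) + (1 - cos b) + (1 - cos c) + (1 - cos d)"
proof -
  have h: "\<bar>sin ((a+b+c+d)/2)\<bar> \<le> \<bar>sin (a/2)\<bar> + \<bar>sin (b/2)\<bar> + \<bar>sin (c/2)\<bar> + \<bar>sin (d/2)\<bar>"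
    using sin_add_abs[of "a/2" "b/2+c/2+d/2"] sin_add_abs[of "b/2" "c/2+d/2"] sin_add_abs[of "c/2" "d/2"]
    by (simp add: add_divide_distrib add.assoc)
  define p where "p = \<bar>sin (a/2)\<bar>"
  define q where "q = \<bar>sin (b/2)\<bar>"
  define r where "r = \<bar>sin (c/2)\<bar>"
  define s where "s = \<bar>sin (d/2)\<bar>"
  have "sin ((a+b+c+d)/2) ^ 2 \<le> (p+q+r+s)^2"
    using h unfolding p_def q_def r_def s_def
    by (metis abs_ge_zero power2_abs power_mono)
  also have "\<dots> \<le> 4 * (p^2+q^2+r^2+s^2)"
  proof -
    have "(p+q+r+s)^2 + ((p-q)^2+(p-r)^2+(p-s)^2+(q-r)^2+(q-s)^2+(r-s)^2) = 4*(p^2+q^2+r^2+s^2)"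
      by (simp add: power2_eq_square algebra_simps)
    moreover have "0 \<le> (p-q)^2+(p-r)^2+(p-s)^2+(q-r)^2+(q-s)^2+(r-s)^2" by simp
    ultimately show ?thesis by linarith
  qed
  finally show ?thesis
    unfolding one_minus_cos p_def q_def r_def s_def by simp
qed

lemma cos_bound:
  fixes t :: real
  assumes "\<bar>t\<bar> \<le> pi"
  shows "t^2 / 18 \<le> 1 - cos t"
proof -
  define s where "s = t/2"
  have s3: "s^2 \<le> 4"
  proof -
    have "\<bar>s\<bar> \<le> 2" using assms pi_less_4 unfolding s_def by auto
    then have "\<bar>s\<bar>^2 \<le> 2^2" by (rule power_mono) simp
    then show ?thesis by simp
  qed
  have sc: "(\<Sum>m<3. sin_coeff m * s^m) = s" by (simp add: numeral_3_eq_3 sin_coeff_def)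
  have f3: "inverse (fact 3 :: real) = 1/6" by (simp add: numeral_3_eq_3)
  have mb: "\<bar>sin s - s\<bar> \<le> \<bar>s\<bar>^3 / 6"
    using Maclaurin_sin_bound[of s 3] unfolding sc f3 by simp
  have "\<bar>s\<bar>^3/6 = \<bar>s\<bar> * s^2 / 6" by (simp add: power3_eq_cube power2_eq_square)
  also have "\<dots> \<le> \<bar>s\<bar> * 4 / 6" using s3 by (intro divide_right_mono mult_left_mono) auto
  finally have "\<bar>s\<bar>/3 \<le> \<bar>sin s\<bar>" using mb by linarith
  then have "(\<bar>s\<bar>/3)^2 \<le> \<bar>sin s\<bar>^2" by (rule power_mono) simp
  then have "s^2/9 \<le> sin s ^2" by (simp add: power_divide)
  moreover have "1 - cos t = 2 * sin s ^ 2" unfolding s_def by (rule one_minus_cos)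
  moreover have "t^2 = 4 * s^2" unfolding s_def by (simp add: power_divide)
  ultimately show ?thesis by linarith
qed

lemma count: "(\<Sum>i\<in>{1..<n}. real (i - 1)) + real (n - 1) = real (n choose 2)"
proof (induction n)
  case 0 then show ?case by simp
next
  case (Suc n)
  show ?case
  proof (cases "n = 0")
    case True then show ?thesis by simp
  next
    case False
    then have e: "{1..<Suc n} = insert n {1..<n}" by auto
    have "(Suc n choose 2) = (n choose 1) + (n choose 2)"
      by (metis Suc_1 binomial_Suc_Suc)
    then show ?thesis using Suc False unfolding e by (simp add: of_nat_diff)
  qed
qed


lemma aux1: "(a::real) \<le> c \<Longrightarrow> a = x/72 \<Longrightarrow> y < x \<Longrightarrow> c \<le> 4*B \<Longrightarrow> y/288 < B"
  by linarith

lemma aux2: "(N::real) * (400/72) < Z \<Longrightarrow> N > 0 \<Longrightarrow> N \<le> Z"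
  by linarith

theorem mainTheorem12:
  shows "\<exists>n0 q0::nat. \<forall>n q \<theta>. n \<ge> 2 \<and> n \<ge> n0 \<and> q \<ge> q0 \<and>
      (\<forall>i\<in>{1..<n}. \<forall>j\<in>{1..<n}. - pi \<le> \<theta> i j \<and> \<theta> i j \<le> pi) \<and>
      (\<exists>i\<in>{1..<n}. \<exists>j\<in>{1..<n}. \<bar>\<theta> i j\<bar> > 1 / sqrt (real q))
      \<longrightarrow> DG_Phi n \<theta> \<le> 1 - 1 / (400 * (real n)^2 * real q)"
proof -
  have key: "DG_Phi n \<theta> \<le> 1 - 1 / (400 * (real n)^2 * real q)"
    if hn: "n \<ge> 2" and hq: "q \<ge> 1"
      and hb: "\<forall>i\<in>{1..<n}. \<forall>j\<in>{1..<n}. - pi \<le> \<theta> i j \<and> \<theta> i j \<le> pi"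
      and hx: "\<exists>i\<in>{1..<n}. \<exists>j\<in>{1..<n}. \<bar>\<theta> i j\<bar> > 1 / sqrt (real q)"
    for n q :: nat and \<theta> :: "nat \<Rightarrow> nat \<Rightarrow> real"
  proof -
    obtain i0 j0 where i0: "i0 \<in> {1..<n}" and j0: "j0 \<in> {1..<n}"
      and big: "1 / sqrt (real q) < \<bar>\<theta> i0 j0\<bar>" using hx by blast
    have i0b: "Suc 0 \<le> i0" "i0 < n" using i0 by auto
    have j0b: "Suc 0 \<le> j0" "j0 < n" using j0 by auto
    define t where "t = \<theta> i0 j0"
    have qpos: "real q > 0" using hq by simp
    have "(1 / sqrt (real q))^2 < \<bar>t\<bar>^2"
      using big unfolding t_def by (intro power_strict_mono) auto
    then have tq: "1 / real q < t^2" using qpos by (simp add: power_divide)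
    have tpi: "\<bar>t\<bar> \<le> pi" using hb i0 j0 unfolding t_def by fastforce
    have ct: "t^2/18 \<le> 1 - cos t" using cos_bound[OF tpi] .
    define I where "I = {1..<n}"
    define F where "F i l j k = 1 - cos (\<theta> i j - \<theta> i k - \<theta> l j + \<theta> l k)" for i l j k
    define G where "G i l j = 1 - cos (\<theta> i j - \<theta> l j)" for i l j
    define H where "H j k i = 1 - cos (\<theta> i j - \<theta> i k)" for j k i
    define K where "K i j = 1 - cos (\<theta> i j)" for i j
    have Fnn: "F i l j k \<ge> 0" for i l j k unfolding F_def by simp
    have Gnn: "G i l j \<ge> 0" for i l j unfolding G_def by simp
    have Hnn: "H j k i \<ge> 0" for j k i unfolding H_def by simp
    have Knn: "K i j \<ge> 0" for i j unfolding K_def by simp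
    define P where "P = (\<Sum>i\<in>I. real (i - 1))"
    define m where "m = real (n - 1)"
    have Pm: "P + m = real (n choose 2)" unfolding P_def m_def I_def by (rule count)
    define B1 where "B1 = (\<Sum>i\<in>I. \<Sum>l\<in>{1..<i}. \<Sum>j\<in>I. \<Sum>k\<in>{1..<j}. F i l j k)"
    define B2 where "B2 = (\<Sum>i\<in>I. \<Sum>l\<in>{1..<i}. \<Sum>j\<in>I. G i l j)"
    define B3 where "B3 = (\<Sum>j\<in>I. \<Sum>k\<in>{1..<j}. \<Sum>i\<in>I. H j k i)"
    define B4 where "B4 = (\<Sum>i\<in>I. \<Sum>j\<in>I. K i j)"
    have cardI: "card I = n - 1" unfolding I_def by simp
    have e1: "(\<Sum>i\<in>I. \<Sum>l\<in>{1..<i}. \<Sum>j\<in>I. \<Sum>k\<in>{1..<j}.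
          cos (\<theta> i j - \<theta> i k - \<theta> l j + \<theta> l k)) = P * P - B1"
      unfolding B1_def F_def P_def
      by (simp add: sum_subtractf sum_distrib_left sum_distrib_right) (simp add: mult.commute)
    have e2: "(\<Sum>i\<in>I. \<Sum>l\<in>{1..<i}. \<Sum>j\<in>I. cos (\<theta> i j - \<theta> l j)) = P * m - B2"
      unfolding B2_def G_def P_def m_def
      by (simp add: sum_subtractf sum_distrib_left sum_distrib_right cardI)
    have e3: "(\<Sum>j\<in>I. \<Sum>k\<in>{1..<j}. \<Sum>i\<in>I. cos (\<theta> i j - \<theta> i k)) = P * m - B3"
      unfolding B3_def H_def P_def m_def
      by (simp add: sum_subtractf sum_distrib_left sum_distrib_right cardI)
    have e4: "(\<Sum>i\<in>I. \<Sum>j\<in>I. cos (\<theta> i j)) = m * m - B4"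
      unfolding B4_def K_def m_def
      by (simp add: sum_subtractf cardI)
    define N where "N = (real (n choose 2))^2"
    define B where "B = B1 + B2 + B3 + B4"
    have NP: "N = P*P + P*m + P*m + m*m" unfolding N_def Pm[symmetric] by (simp add: power2_eq_square algebra_simps)
    have phi: "DG_Phi n \<theta> = (N - B) / N"
      unfolding DG_Phi_def using e1 e2 e3 e4 NP unfolding I_def N_def B_def
      by (simp add: divide_inverse)
    have symF1: "F i l k j = F i l j k" for i l j k
    proof -
      have "\<theta> i k - \<theta> i j - \<theta> l k + \<theta> l j = - (\<theta> i j - \<theta> i k - \<theta> l j + \<theta> l k)" by simp
      then show ?thesis unfolding F_def by (metis cos_minus)
    qed
    have symF2: "F l i j k = F i l j k" for i l j k
    proof -
      have "\<theta> l j - \<theta> l k - \<theta> i j + \<theta> i k = - (\<theta> i j - \<theta> i k - \<theta> l j + \<theta> l k)" by simp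
      then show ?thesis unfolding F_def by (metis cos_minus)
    qed
    have Fz1: "F i l j j = 0" for i l j unfolding F_def by simp
    have Fz2: "F i i j k = 0" for i j k unfolding F_def by simp
    have A1: "(\<Sum>i\<in>I. \<Sum>l\<in>I. \<Sum>j\<in>I. \<Sum>k\<in>I. F i l j k) = 4 * B1"
    proof -
      have inner: "(\<Sum>j\<in>I. \<Sum>k\<in>I. F i l j k) = 2 * (\<Sum>j\<in>I. \<Sum>k\<in>{1..<j}. F i l j k)" for i l
        unfolding I_def by (rule sum_sym) (simp_all add: symF1 Fz1)
      have "(\<Sum>i\<in>I. \<Sum>l\<in>I. \<Sum>j\<in>I. \<Sum>k\<in>{1..<j}. F i l j k)
          = 2 * (\<Sum>i\<in>I. \<Sum>l\<in>{1..<i}. \<Sum>j\<in>I. \<Sum>k\<in>{1..<j}. F i l j k)"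
        unfolding I_def by (rule sum_sym) (simp_all add: symF2 Fz2)
      then show ?thesis unfolding inner B1_def by (simp add: sum_distrib_left[symmetric])
    qed
    have A2: "(\<Sum>i\<in>I. \<Sum>l\<in>I. \<Sum>j\<in>I. G i l j) = 2 * B2"
    proof -
      have s: "G l i j = G i l j" for i l j
      proof -
        have "\<theta> l j - \<theta> i j = - (\<theta> i j - \<theta> l j)" by simp
        then show ?thesis unfolding G_def by (metis cos_minus)
      qed
      show ?thesis unfolding B2_def I_def by (rule sum_sym) (simp_all add: s G_def)
    qed
    have A3: "(\<Sum>j\<in>I. \<Sum>k\<in>I. \<Sum>i\<in>I. H j k i) = 2 * B3"
    proof -
      have s: "H k j i = H j k i" for i j k
      proof -
        have "\<theta> i k - \<theta> i j = - (\<theta> i j - \<theta> i k)" by simp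
        then show ?thesis unfolding H_def by (metis cos_minus)
      qed
      show ?thesis unfolding B3_def I_def by (rule sum_sym) (simp_all add: s H_def)
    qed
    have pt: "(1 - cos t) / 4 \<le> F i0 l j0 k + G i0 l k + H j0 k l + K l k" for l k
    proof -
      have "(\<theta> i0 j0 - \<theta> i0 k - \<theta> l j0 + \<theta> l k) + (\<theta> i0 k - \<theta> l k) + (\<theta> l j0 - \<theta> l k) + \<theta> l k = t"
        unfolding t_def by simp
      then show ?thesis using four[of "\<theta> i0 j0 - \<theta> i0 k - \<theta> l j0 + \<theta> l k" "\<theta> i0 k - \<theta> l k"
          "\<theta> l j0 - \<theta> l k" "\<theta> l k"]
        unfolding F_def G_def H_def K_def by simp
    qed
    have low: "m * m * ((1 - cos t) / 4) \<le> (\<Sum>l\<in>I. \<Sum>k\<in>I. F i0 l j0 k + G i0 l k + H j0 k l + K l k)"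
    proof -
      have "(\<Sum>l\<in>I. \<Sum>k\<in>I. (1 - cos t) / 4) \<le> (\<Sum>l\<in>I. \<Sum>k\<in>I. F i0 l j0 k + G i0 l k + H j0 k l + K l k)"
        by (intro sum_mono pt)
      then show ?thesis by (simp add: cardI m_def)
    qed
    have u1: "(\<Sum>l\<in>I. \<Sum>k\<in>I. F i0 l j0 k) \<le> (\<Sum>i\<in>I. \<Sum>l\<in>I. \<Sum>j\<in>I. \<Sum>k\<in>I. F i l j k)"
    proof -
      have "(\<Sum>l\<in>I. \<Sum>k\<in>I. F i0 l j0 k) \<le> (\<Sum>l\<in>I. \<Sum>j\<in>I. \<Sum>k\<in>I. F i0 l j k)"
      proof (rule sum_mono)
        fix l assume "l \<in> I"
        show "(\<Sum>k\<in>I. F i0 l j0 k) \<le> (\<Sum>j\<in>I. \<Sum>k\<in>I. F i0 l j k)"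
          by (rule member_le_sum[where f = "\<lambda>j. \<Sum>k\<in>I. F i0 l j k"])
             (auto simp: I_def j0b Fnn intro!: sum_nonneg)
      qed
      also have "\<dots> \<le> (\<Sum>i\<in>I. \<Sum>l\<in>I. \<Sum>j\<in>I. \<Sum>k\<in>I. F i l j k)"
        by (rule member_le_sum[where f = "\<lambda>i. \<Sum>l\<in>I. \<Sum>j\<in>I. \<Sum>k\<in>I. F i l j k"])
           (auto simp: I_def i0b Fnn intro!: sum_nonneg)
      finally show ?thesis .
    qed
    have u2: "(\<Sum>l\<in>I. \<Sum>k\<in>I. G i0 l k) \<le> (\<Sum>i\<in>I. \<Sum>l\<in>I. \<Sum>j\<in>I. G i l j)"
      by (rule member_le_sum[where f = "\<lambda>i. \<Sum>l\<in>I. \<Sum>j\<in>I. G i l j"])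
         (auto simp: I_def i0b Gnn intro!: sum_nonneg)
    have u3: "(\<Sum>l\<in>I. \<Sum>k\<in>I. H j0 k l) \<le> (\<Sum>j\<in>I. \<Sum>k\<in>I. \<Sum>i\<in>I. H j k i)"
    proof -
      have "(\<Sum>l\<in>I. \<Sum>k\<in>I. H j0 k l) = (\<Sum>k\<in>I. \<Sum>l\<in>I. H j0 k l)" by (rule sum.swap)
      also have "\<dots> \<le> (\<Sum>j\<in>I. \<Sum>k\<in>I. \<Sum>i\<in>I. H j k i)"
        by (rule member_le_sum[where f = "\<lambda>j. \<Sum>k\<in>I. \<Sum>i\<in>I. H j k i"])
           (auto simp: I_def j0b Hnn intro!: sum_nonneg)
      finally show ?thesis .
    qed
    have sp: "(\<Sum>l\<in>I. \<Sum>k\<in>I. F i0 l j0 k + G i0 l k + H j0 k l + K l k)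
        = (\<Sum>l\<in>I. \<Sum>k\<in>I. F i0 l j0 k) + (\<Sum>l\<in>I. \<Sum>k\<in>I. G i0 l k)
          + (\<Sum>l\<in>I. \<Sum>k\<in>I. H j0 k l) + (\<Sum>l\<in>I. \<Sum>k\<in>I. K l k)"
      by (simp add: sum.distrib)
    have B1nn: "B1 \<ge> 0" unfolding B1_def by (intro sum_nonneg Fnn)
    have B2nn: "B2 \<ge> 0" unfolding B2_def by (intro sum_nonneg Gnn)
    have B3nn: "B3 \<ge> 0" unfolding B3_def by (intro sum_nonneg Hnn)
    have B4nn: "B4 \<ge> 0" unfolding B4_def by (intro sum_nonneg Knn)
    have lowB: "m * m * ((1 - cos t) / 4) \<le> 4 * B"
    proof -
      have "m * m * ((1 - cos t) / 4) \<le> (\<Sum>l\<in>I. \<Sum>k\<in>I. F i0 l j0 k + G i0 l k + H j0 k l + K l k)" by (rule low)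
      also have "\<dots> = (\<Sum>l\<in>I. \<Sum>k\<in>I. F i0 l j0 k) + (\<Sum>l\<in>I. \<Sum>k\<in>I. G i0 l k)
          + (\<Sum>l\<in>I. \<Sum>k\<in>I. H j0 k l) + (\<Sum>l\<in>I. \<Sum>k\<in>I. K l k)" by (rule sp)
      also have "\<dots> \<le> 4 * B1 + 2 * B2 + 2 * B3 + B4"
        unfolding A1[symmetric] A2[symmetric] A3[symmetric] B4_def
        by (intro add_mono u1 u2 u3 order_refl)
      also have "\<dots> \<le> 4 * B" unfolding B_def using B2nn B3nn B4nn by (simp add: distrib_left)
      finally show ?thesis .
    qed
    have mpos: "m > 0" unfolding m_def using hn by simp
    have mm: "m * m > 0" using mpos by simp
    have c1: "t^2/72 \<le> (1 - cos t)/4" using ct by simp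
    have h1: "m * m * (t^2/72) \<le> m * m * ((1 - cos t)/4)"
      by (rule mult_left_mono[OF c1]) (use mm in simp)
    have h1': "m * m * (t^2/72) = (m * m * t^2) / 72" by simp
    have h2: "m * m * (1 / real q) < m * m * t^2" by (rule mult_strict_left_mono[OF tq mm])
    have Bq: "m * m * (1 / real q) / 288 < B" using aux1[OF h1 h1' h2 lowB] .
    have ch: "real (n choose 2) = real n * m / 2"
    proof -
      have ev: "2 dvd (n * (n - 1))" unfolding even_mult_iff by presburger
      have "real (n * (n - 1) div 2) = real (n * (n - 1)) / 2"
        using real_of_nat_div[OF ev] by simp
      then show ?thesis unfolding choose_two m_def by simp
    qed
    have Nv: "N = (real n)^2 * (m * m) / 4" unfolding N_def ch by (simp add: power2_eq_square)
    have npos: "real n > 0" using hn by simp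
    have Npos: "N > 0" unfolding Nv using npos mm by simp
    have eq: "(m * m * (1 / real q) / 288) * (400 * (real n)^2 * real q) = N * (400 / 72)"
      unfolding Nv using qpos by (simp add: power2_eq_square)
    have den: "400 * (real n)^2 * real q > 0" using npos qpos by simp
    have "N * (400 / 72) < B * (400 * (real n)^2 * real q)"
      unfolding eq[symmetric] by (rule mult_strict_right_mono[OF Bq den])
    then have "N \<le> B * (400 * (real n)^2 * real q)" using Npos by (rule aux2)
    then have "1 / (400 * (real n)^2 * real q) \<le> B / N"
      using Npos den by (simp add: divide_simps mult.commute)
    then show ?thesis unfolding phi using Npos by (simp add: diff_divide_distrib)
  qed
  show ?thesis
    apply (rule exI[of _ 0], rule exI[of _ 1])
    apply (intro allI impI)
    apply (elim conjE)
    apply (rule key)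
       apply assumption+
    done
qed

end
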